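(* Let $v$ be a vertex of a pasting scheme. There do not exist four distinct edges $e:u\to v$, $b:v\to w$, $a:q\to v$, $f:v\to p$ incident to $v$ that appear in the clockwise cyclic order of edges around $v$ in the order $e,b,a,f$ (possibly with other edges in between). Equivalently, in the cyclic order around $v$ the incoming edges form one consecutive block and the outgoing edges another.
   Context: A plane graph is a finite connected directed graph $G$ with an embedding in the plane $\mathbb C$; the edges incident to a vertex inherit a clockwise cyclic order from the orientation of the plane. Its faces are the closures of the connected components of $\mathbb C\setminus G$; the unbounded one is the exterior face, the others interior faces. Each edge has a face on its left and one on its right. The exterior face is anchorable if the set of edges having the exterior face on their left and the set having it on their right each form a nonempty directed path from a vertex $s_G$ to a vertex $t_G$. An interior face $F$ is anchorable if the set of edges having $F$ on their right and the set having $F$ on their left each form a nonempty directed path from $s_F$ to $t_F$, with no common edges and no common vertices other than $s_F,t_F$. A pasting scheme is a finite connected plane graph all of whose faces are anchorable, with $s_G$ the only vertex with no incoming edges and $t_G$ the only vertex with no outgoing edges. *)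

theory Defs
  imports Main
begin

text \<open>Plane graphs are represented combinatorially (rotation systems / combinatorial maps).
An edge e has two darts: (e, True), the half-edge at src e traversed from src e to tgt e,
and (e, False), the half-edge at tgt e traversed from tgt e to src e.
The rotation sigma maps a dart to the next dart clockwise around its vertex.\<close>

definition darts :: "'e set \<Rightarrow> ('e \<times> bool) set" where
  "darts E = E \<times> UNIV"

fun dvert :: "('e \<Rightarrow> 'v) \<Rightarrow> ('e \<Rightarrow> 'v) \<Rightarrow> 'e \<times> bool \<Rightarrow> 'v" where
  "dvert src tgt (e, b) = (if b then src e else tgt e)"

fun flip :: "'e \<times> bool \<Rightarrow> 'e \<times> bool" where
  "flip (e, b) = (e, \<not> b)"

definition verts :: "'e set \<Rightarrow> ('e \<Rightarrow> 'v) \<Rightarrow> ('e \<Rightarrow> 'v) \<Rightarrow> 'v set" where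
  "verts E src tgt = src ` E \<union> tgt ` E"

definition rotation_system ::
  "'e set \<Rightarrow> ('e \<Rightarrow> 'v) \<Rightarrow> ('e \<Rightarrow> 'v) \<Rightarrow> ('e \<times> bool \<Rightarrow> 'e \<times> bool) \<Rightarrow> bool" where
  "rotation_system E src tgt \<sigma> \<longleftrightarrow>
     bij_betw \<sigma> (darts E) (darts E) \<and>
     (\<forall>d\<in>darts E. dvert src tgt (\<sigma> d) = dvert src tgt d) \<and>
     (\<forall>d\<in>darts E. \<forall>d'\<in>darts E. dvert src tgt d = dvert src tgt d' \<longrightarrow> (\<exists>n. (\<sigma> ^^ n) d = d'))"

text \<open>Face permutation: traverse a dart, then turn to the next edge clockwise at the far end.
The face traced this way lies on the left of each traversed dart.\<close>
definition faceperm :: "('e \<times> bool \<Rightarrow> 'e \<times> bool) \<Rightarrow> 'e \<times> bool \<Rightarrow> 'e \<times> bool" where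
  "faceperm \<sigma> = \<sigma> \<circ> flip"

definition faces :: "'e set \<Rightarrow> ('e \<times> bool \<Rightarrow> 'e \<times> bool) \<Rightarrow> ('e \<times> bool) set set" where
  "faces E \<sigma> = {{(faceperm \<sigma> ^^ n) d | n. True} | d. d \<in> darts E}"

definition left_edges :: "('e \<times> bool) set \<Rightarrow> 'e set" where
  "left_edges F = {e. (e, True) \<in> F}"

definition right_edges :: "('e \<times> bool) set \<Rightarrow> 'e set" where
  "right_edges F = {e. (e, False) \<in> F}"

definition ugraph_connected :: "'e set \<Rightarrow> ('e \<Rightarrow> 'v) \<Rightarrow> ('e \<Rightarrow> 'v) \<Rightarrow> bool" where
  "ugraph_connected E src tgt \<longleftrightarrow>
     (let R = {(src e, tgt e) | e. e \<in> E} in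
      \<forall>u\<in>verts E src tgt. \<forall>w\<in>verts E src tgt. (u, w) \<in> (R \<union> R\<inverse>)\<^sup>*)"

text \<open>A finite connected plane graph: connected rotation system of genus 0 (Euler's formula).\<close>
definition plane_graph ::
  "'e set \<Rightarrow> ('e \<Rightarrow> 'v) \<Rightarrow> ('e \<Rightarrow> 'v) \<Rightarrow> ('e \<times> bool \<Rightarrow> 'e \<times> bool) \<Rightarrow> bool" where
  "plane_graph E src tgt \<sigma> \<longleftrightarrow>
     finite E \<and> E \<noteq> {} \<and> rotation_system E src tgt \<sigma> \<and> ugraph_connected E src tgt \<and>
     int (card (verts E src tgt)) - int (card E) + int (card (faces E \<sigma>)) = 2"

definition is_dpath :: "('e \<Rightarrow> 'v) \<Rightarrow> ('e \<Rightarrow> 'v) \<Rightarrow> 'e set \<Rightarrow> 'v \<Rightarrow> 'v \<Rightarrow> bool" where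
  "is_dpath src tgt S s t \<longleftrightarrow>
     (\<exists>es. es \<noteq> [] \<and> distinct es \<and> set es = S \<and> src (hd es) = s \<and> tgt (last es) = t \<and>
        (\<forall>i. i + 1 < length es \<longrightarrow> tgt (es ! i) = src (es ! (i + 1))) \<and>
        distinct (src (hd es) # map tgt es))"

definition edge_verts :: "('e \<Rightarrow> 'v) \<Rightarrow> ('e \<Rightarrow> 'v) \<Rightarrow> 'e set \<Rightarrow> 'v set" where
  "edge_verts src tgt S = src ` S \<union> tgt ` S"

definition interior_anchorable :: "('e \<Rightarrow> 'v) \<Rightarrow> ('e \<Rightarrow> 'v) \<Rightarrow> ('e \<times> bool) set \<Rightarrow> bool" where
  "interior_anchorable src tgt F \<longleftrightarrow>
     (\<exists>s t. is_dpath src tgt (right_edges F) s t \<and> is_dpath src tgt (left_edges F) s t \<and>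
        right_edges F \<inter> left_edges F = {} \<and>
        edge_verts src tgt (right_edges F) \<inter> edge_verts src tgt (left_edges F) \<subseteq> {s, t})"

definition pasting_scheme ::
  "'e set \<Rightarrow> ('e \<Rightarrow> 'v) \<Rightarrow> ('e \<Rightarrow> 'v) \<Rightarrow> ('e \<times> bool \<Rightarrow> 'e \<times> bool) \<Rightarrow> ('e \<times> bool) set \<Rightarrow> bool" where
  "pasting_scheme E src tgt \<sigma> ext \<longleftrightarrow>
     plane_graph E src tgt \<sigma> \<and> ext \<in> faces E \<sigma> \<and>
     (\<forall>F\<in>faces E \<sigma>. F \<noteq> ext \<longrightarrow> interior_anchorable src tgt F) \<and>
     (\<exists>s t. is_dpath src tgt (left_edges ext) s t \<and> is_dpath src tgt (right_edges ext) s t \<and>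
        (\<forall>v\<in>verts E src tgt. (\<not> (\<exists>e\<in>E. tgt e = v)) \<longleftrightarrow> v = s) \<and>
        (\<forall>v\<in>verts E src tgt. (\<not> (\<exists>e\<in>E. src e = v)) \<longleftrightarrow> v = t))"

definition cyclic_order4 ::
  "('e \<times> bool \<Rightarrow> 'e \<times> bool) \<Rightarrow> 'e \<times> bool \<Rightarrow> 'e \<times> bool \<Rightarrow> 'e \<times> bool \<Rightarrow> 'e \<times> bool \<Rightarrow> bool" where
  "cyclic_order4 \<sigma> d1 d2 d3 d4 \<longleftrightarrow>
     (\<exists>i j k. 0 < i \<and> i < j \<and> j < k \<and>
        (\<sigma> ^^ i) d1 = d2 \<and> (\<sigma> ^^ j) d1 = d3 \<and> (\<sigma> ^^ k) d1 = d4 \<and>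
        (\<forall>m. 0 < m \<and> m \<le> k \<longrightarrow> (\<sigma> ^^ m) d1 \<noteq> d1))"

end

theory Submission
  imports Defs
begin

lemma funpow_mult_fix: "(g^^p) x = x \<Longrightarrow> (g^^(p*q)) x = x"
  by (induction q) (simp_all add: funpow_add)

lemma funpow_mod_fix:
  assumes h: "(g^^p) x = x" shows "(g^^(n mod p)) x = (g^^n) x"
proof -
  have "(g^^n) x = (g^^(n mod p + p * (n div p))) x" by simp
  also have "\<dots> = (g^^(n mod p)) ((g^^(p*(n div p))) x)" by (simp only: funpow_add comp_apply)
  finally show ?thesis using funpow_mult_fix[OF h] by simp
qed

lemma change_between:
  assumes "a < b" "P ((g^^a) x) \<noteq> P ((g^^b) x)"
  shows "\<exists>c. a \<le> c \<and> c < b \<and> P ((g^^c) x) \<noteq> P ((g^^Suc c) x)"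
  using assms
proof (induction b)
  case 0 then show ?case by simp
next
  case (Suc b)
  show ?case
  proof (cases "P ((g^^b) x) = P ((g^^Suc b) x)")
    case True
    then have "a < b" using Suc.prems by (metis less_SucE)
    then obtain c where "a \<le> c \<and> c < b \<and> P ((g^^c) x) \<noteq> P ((g^^Suc c) x)"
      using Suc.IH Suc.prems True by auto
    then show ?thesis by (intro exI[of _ c]) auto
  next
    case False
    then show ?thesis using Suc.prems by (intro exI[of _ b]) auto
  qed
qed

lemma min_period:
  assumes "0 < n" "(g^^n) x = x"
  obtains p where "0 < p" "(g^^p) x = x" "\<And>m. 0 < m \<Longrightarrow> m < p \<Longrightarrow> (g^^m) x \<noteq> x"
proof -
  define p where "p = (LEAST m. 0 < m \<and> (g^^m) x = x)"
  have "0 < p \<and> (g^^p) x = x" unfolding p_def by (rule LeastI[of _ n]) (use assms in auto)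
  moreover have "\<And>m. 0<m \<Longrightarrow> m<p \<Longrightarrow> (g^^m) x \<noteq> x" unfolding p_def using not_less_Least by blast
  ultimately show ?thesis using that by blast
qed

lemma period_neq:
  assumes "(g^^p) x = x" "\<And>m. 0 < m \<Longrightarrow> m < p \<Longrightarrow> (g^^m) x \<noteq> x" "i < j" "j < p"
  shows "(g^^i) x \<noteq> (g^^j) x"
proof
  assume eq: "(g^^i) x = (g^^j) x"
  have pj: "(p-j)+j = p" using assms(4) by simp
  have a1: "(g^^(p - j + i)) x = (g^^(p-j)) ((g^^i) x)" by (simp only: funpow_add comp_apply)
  have a2: "(g^^(p-j)) ((g^^j) x) = (g^^((p-j)+j)) x" by (simp only: funpow_add comp_apply)
  have a3: "(g^^((p-j)+j)) x = x" unfolding pj by (rule assms(1))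
  have "(g^^(p - j + i)) x = x" using a1 a2 a3 eq by simp
  moreover have "0 < p - j + i" "p - j + i < p" using assms(3,4) by auto
  ultimately show False using assms(2)[of "p - j + i"] by simp
qed

lemma cyc2:
  assumes "0 < p" "(g^^p) x = x" "P ((g^^n) x) \<noteq> P x"
  shows "\<exists>i j. i < j \<and> j < p \<and> P ((g^^i) x) \<noteq> P ((g^^Suc i) x) \<and> P ((g^^j) x) \<noteq> P ((g^^Suc j) x)"
proof -
  define n' where "n' = n mod p"
  have n'p: "n' < p" using assms(1) by (simp add: n'_def)
  have eq: "(g^^n') x = (g^^n) x" unfolding n'_def by (rule funpow_mod_fix[OF assms(2)])
  then have "0 < n'" using assms(3) by (metis funpow_0 gr0I)
  then obtain i where i: "0 \<le> i \<and> i < n' \<and> P ((g^^i) x) \<noteq> P ((g^^Suc i) x)"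
    using change_between[of 0 n' P g x] eq assms(3) by auto
  obtain j where j: "n' \<le> j \<and> j < p \<and> P ((g^^j) x) \<noteq> P ((g^^Suc j) x)"
    using change_between[of n' p P g x] eq assms(2,3) n'p by auto
  show ?thesis using i j by (intro exI[of _ i] exI[of _ j]) auto
qed

lemma funpow_in: "\<forall>y\<in>D. g y \<in> D \<Longrightarrow> x \<in> D \<Longrightarrow> (g^^n) x \<in> D"
  by (induction n) auto

lemma funpow_cancel:
  assumes inj: "inj_on g D" and maps: "\<forall>y\<in>D. g y \<in> D" and x: "x \<in> D"
  shows "i < j \<Longrightarrow> (g^^i) x = (g^^j) x \<Longrightarrow> (g^^(j-i)) x = x"
proof (induction i arbitrary: j)
  case 0 then show ?case by simp
next
  case (Suc i)
  then obtain j' where j: "j = Suc j'" by (cases j) auto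
  have "g ((g^^i) x) = g ((g^^j') x)" using Suc.prems j by simp
  then have "(g^^i) x = (g^^j') x" using inj funpow_in[OF maps x] by (meson inj_onD)
  then show ?case using Suc.IH[of j'] Suc.prems j by simp
qed

lemma perm_period:
  assumes fin: "finite D" and inj: "inj_on g D" and maps: "\<forall>y\<in>D. g y \<in> D" and x: "x \<in> D"
  shows "\<exists>n>0. (g^^n) x = x"
proof -
  have "\<not> inj_on (\<lambda>i. (g^^i) x) {..card D}"
  proof
    assume "inj_on (\<lambda>i. (g^^i) x) {..card D}"
    then have "card {..card D} \<le> card D"
      by (rule card_inj_on_le) (auto simp: funpow_in[OF maps x] fin)
    then show False by simp
  qed
  then obtain i j where ij: "i \<noteq> j" "(g^^i) x = (g^^j) x" unfolding inj_on_def by blast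
  show ?thesis
  proof (cases "i < j")
    case True
    then show ?thesis using funpow_cancel[OF inj maps x True ij(2)] by (intro exI[of _ "j-i"]) auto
  next
    case False
    then have "j < i" using ij by auto
    then show ?thesis using funpow_cancel[OF inj maps x, of j i] ij by (intro exI[of _ "i-j"]) auto
  qed
qed

lemma dpath_ne: "is_dpath src tgt S s t \<Longrightarrow> S \<noteq> {}"
  unfolding is_dpath_def by auto

lemma flip_darts[simp]: "flip x \<in> darts E \<longleftrightarrow> x \<in> darts E"
  by (cases x) (simp add: darts_def)

lemma flip_flip[simp]: "flip (flip x) = x"
  by (cases x) simp

lemma snd_flip[simp]: "snd (flip x) = (\<not> snd x)"
  by (cases x) simp


theorem mainTheorem11:
  fixes E :: "'e set" and src tgt :: "'e \<Rightarrow> 'v"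
    and \<sigma> :: "'e \<times> bool \<Rightarrow> 'e \<times> bool" and ext :: "('e \<times> bool) set" and v :: 'v
  assumes "pasting_scheme E src tgt \<sigma> ext"
    and "v \<in> verts E src tgt"
  shows "\<not> (\<exists>e b a f. e \<in> E \<and> b \<in> E \<and> a \<in> E \<and> f \<in> E \<and>
            distinct [e, b, a, f] \<and>
            tgt e = v \<and> src b = v \<and> tgt a = v \<and> src f = v \<and>
            cyclic_order4 \<sigma> (e, False) (b, True) (a, False) (f, True))"
proof
  assume "\<exists>e b a f. e \<in> E \<and> b \<in> E \<and> a \<in> E \<and> f \<in> E \<and>
            distinct [e, b, a, f] \<and>
            tgt e = v \<and> src b = v \<and> tgt a = v \<and> src f = v \<and>
            cyclic_order4 \<sigma> (e, False) (b, True) (a, False) (f, True)"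
  then obtain e b a f where eE: "e \<in> E" and bE: "b \<in> E"
    and te: "tgt e = v" and sb: "src b = v"
    and co: "cyclic_order4 \<sigma> (e, False) (b, True) (a, False) (f, True)" by blast
  from assms(1) have pg: "plane_graph E src tgt \<sigma>"
    and intF: "\<forall>F\<in>faces E \<sigma>. F \<noteq> ext \<longrightarrow> interior_anchorable src tgt F"
    unfolding pasting_scheme_def by auto
  from assms(1) obtain s t where extL: "is_dpath src tgt (left_edges ext) s t"
    and extR: "is_dpath src tgt (right_edges ext) s t"
    and srcs: "\<forall>w\<in>verts E src tgt. (\<not>(\<exists>e\<in>E. tgt e = w)) \<longleftrightarrow> w = s"
    and sinks: "\<forall>w\<in>verts E src tgt. (\<not>(\<exists>e\<in>E. src e = w)) \<longleftrightarrow> w = t"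
    unfolding pasting_scheme_def by blast
  from pg have finE: "finite E" and rs: "rotation_system E src tgt \<sigma>"
    and euler: "int (card (verts E src tgt)) - int (card E) + int (card (faces E \<sigma>)) = 2"
    unfolding plane_graph_def by auto
  define D where "D = darts E"
  define \<phi> where "\<phi> = faceperm \<sigma>"
  define V where "V = verts E src tgt"
  define N where "N = {d\<in>D. snd d \<noteq> snd (\<sigma> d)}"
  define S where "S = {d\<in>D. snd d = snd (\<sigma> d)}"
  define Ch where "Ch = {x\<in>D. snd x \<noteq> snd (\<phi> x)}"
  define Nv where "Nv w = {d\<in>N. dvert src tgt d = w}" for w
  define orb where "orb d = {(\<phi>^^n) d | n. True}" for d
  have finD: "finite D" using finE by (simp add: D_def darts_def)
  have cardD: "card D = 2 * card E" by (simp add: D_def darts_def card_cartesian_product)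
  have bij: "bij_betw \<sigma> D D" and dv: "\<forall>d\<in>D. dvert src tgt (\<sigma> d) = dvert src tgt d"
    and conn: "\<forall>d\<in>D. \<forall>d'\<in>D. dvert src tgt d = dvert src tgt d' \<longrightarrow> (\<exists>n. (\<sigma>^^n) d = d')"
    using rs unfolding rotation_system_def D_def by auto
  have \<sigma>D: "\<forall>d\<in>D. \<sigma> d \<in> D" using bij bij_betwE by blast
  have inj\<sigma>: "inj_on \<sigma> D" using bij bij_betw_imp_inj_on by blast
  have \<phi>eq: "\<phi> x = \<sigma> (flip x)" for x by (simp add: \<phi>_def faceperm_def)
  have \<phi>D: "\<forall>d\<in>D. \<phi> d \<in> D" using \<sigma>D \<phi>eq by (simp add: D_def)
  have inj\<phi>: "inj_on \<phi> D"
  proof (rule inj_onI)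
    fix x y assume xy: "x\<in>D" "y\<in>D" "\<phi> x = \<phi> y"
    have "flip x \<in> D" "flip y \<in> D" using xy by (simp_all add: D_def)
    then have "flip x = flip y" using inj_onD[OF inj\<sigma>] \<phi>eq xy(3) by metis
    then show "x = y" by (metis flip_flip)
  qed
  have finN: "finite N" using finD by (simp add: N_def)
  have finCh: "finite Ch" using finD by (simp add: Ch_def)
  have NS: "card N + card S = card D"
  proof -
    have "N \<union> S = D" "N \<inter> S = {}" by (auto simp: N_def S_def)
    then show ?thesis using finD card_Un_disjoint[of N S] by (metis finite_Un)
  qed
  have SCh: "card S = card Ch"
  proof -
    have "Ch = flip ` S"
    proof
      show "Ch \<subseteq> flip ` S"
      proof
        fix x assume "x \<in> Ch"
        then have "flip x \<in> S" by (auto simp: Ch_def S_def \<phi>eq D_def)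
        then show "x \<in> flip ` S" by (metis flip_flip image_eqI)
      qed
      show "flip ` S \<subseteq> Ch" by (auto simp: Ch_def S_def \<phi>eq D_def darts_def)
    qed
    moreover have "inj_on flip S" by (metis flip_flip inj_onI)
    ultimately show ?thesis by (simp add: card_image)
  qed
  have faces_eq: "faces E \<sigma> = orb ` D" unfolding faces_def orb_def D_def \<phi>_def by blast
  have finF: "finite (faces E \<sigma>)" using faces_eq finD by simp
  have per_\<phi>: "\<exists>n>0. (\<phi>^^n) d = d" if "d \<in> D" for d using perm_period[OF finD inj\<phi> \<phi>D that] .
  have same_orb: "orb x = orb d" if H: "d \<in> D" "x \<in> orb d" for x d
  proof -
    obtain a where xa: "x = (\<phi>^^a) d" using H(2) by (auto simp: orb_def)
    obtain p where p: "p > 0" "(\<phi>^^p) d = d" using per_\<phi>[OF H(1)] by blast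
    show ?thesis
    proof
      show "orb x \<subseteq> orb d"
      proof
        fix y assume "y \<in> orb x"
        then obtain n where "y = (\<phi>^^n) x" by (auto simp: orb_def)
        then have "y = (\<phi>^^(n+a)) d" using xa by (simp add: funpow_add)
        then show "y \<in> orb d" by (auto simp: orb_def)
      qed
      show "orb d \<subseteq> orb x"
      proof
        fix y assume "y \<in> orb d"
        then obtain n where y: "y = (\<phi>^^n) d" by (auto simp: orb_def)
        have ge: "a \<le> n + p*a" using p(1) by (metis One_nat_def Suc_leI mult_1 mult_le_mono1 trans_le_add2)
        have "(\<phi>^^(n + p*a - a)) x = (\<phi>^^(n + p*a - a + a)) d" using xa by (simp only: funpow_add comp_apply)
        also have "n + p*a - a + a = n + p*a" using ge by simp
        also have "(\<phi>^^(n + p*a)) d = (\<phi>^^n) ((\<phi>^^(p*a)) d)" by (simp only: funpow_add comp_apply)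
        also have "\<dots> = y" using funpow_mult_fix[OF p(2)] y by simp
        finally show "y \<in> orb x" by (auto simp: orb_def)
      qed
    qed
  qed
  have face_both: "(\<exists>e. (e,True) \<in> F) \<and> (\<exists>e. (e,False) \<in> F)" if "F \<in> faces E \<sigma>" for F
  proof (cases "F = ext")
    case True
    then show ?thesis using dpath_ne[OF extL] dpath_ne[OF extR] by (auto simp: left_edges_def right_edges_def)
  next
    case False
    then have "interior_anchorable src tgt F" using intF that by blast
    then obtain s' t' where "is_dpath src tgt (right_edges F) s' t'" "is_dpath src tgt (left_edges F) s' t'"
      unfolding interior_anchorable_def by blast
    then show ?thesis using dpath_ne by (fastforce simp: left_edges_def right_edges_def)
  qed
  have ChF: "2 \<le> card (Ch \<inter> F)" if H: "F \<in> faces E \<sigma>" for F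
  proof -
    obtain d where d: "d \<in> D" "F = orb d" using H faces_eq by auto
    have "\<exists>x\<in>F. snd x \<noteq> snd d" using face_both[OF H] by (cases "snd d") force+
    then obtain n where n: "snd ((\<phi>^^n) d) \<noteq> snd d" using d(2) unfolding orb_def by blast
    obtain n0 where n0: "0 < n0" "(\<phi>^^n0) d = d" using per_\<phi>[OF d(1)] by blast
    obtain p where p: "0 < p" "(\<phi>^^p) d = d" "\<And>m. 0 < m \<Longrightarrow> m < p \<Longrightarrow> (\<phi>^^m) d \<noteq> d"
      by (rule min_period[OF n0]) blast
    obtain i j where ij: "i < j" "j < p" "snd ((\<phi>^^i) d) \<noteq> snd ((\<phi>^^Suc i) d)"
      "snd ((\<phi>^^j) d) \<noteq> snd ((\<phi>^^Suc j) d)"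
      using cyc2[OF p(1) p(2), of snd n] n by blast
    have c1: "(\<phi>^^i) d \<in> Ch" using ij(3) funpow_in[OF \<phi>D d(1), of i] by (simp add: Ch_def)
    have c2: "(\<phi>^^j) d \<in> Ch" using ij(4) funpow_in[OF \<phi>D d(1), of j] by (simp add: Ch_def)
    have f1: "(\<phi>^^i) d \<in> F" "(\<phi>^^j) d \<in> F" using d(2) unfolding orb_def by blast+
    have sub: "{(\<phi>^^i) d, (\<phi>^^j) d} \<subseteq> Ch \<inter> F" using c1 c2 f1 by blast
    have neq: "(\<phi>^^i) d \<noteq> (\<phi>^^j) d" using period_neq[OF p(2) p(3) ij(1) ij(2)] .
    have "card {(\<phi>^^i) d, (\<phi>^^j) d} = 2" using neq by simp
    moreover have "card {(\<phi>^^i) d, (\<phi>^^j) d} \<le> card (Ch \<inter> F)"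
      by (rule card_mono[OF _ sub]) (use finCh in simp)
    ultimately show ?thesis by simp
  qed
  have disjF: "\<forall>F1\<in>faces E \<sigma>. \<forall>F2\<in>faces E \<sigma>. F1 \<noteq> F2 \<longrightarrow> (Ch \<inter> F1) \<inter> (Ch \<inter> F2) = {}"
  proof (intro ballI impI)
    fix F1 F2 assume F: "F1 \<in> faces E \<sigma>" "F2 \<in> faces E \<sigma>" "F1 \<noteq> F2"
    obtain d1 where d1: "d1 \<in> D" "F1 = orb d1" using F faces_eq by auto
    obtain d2 where d2: "d2 \<in> D" "F2 = orb d2" using F faces_eq by auto
    show "(Ch \<inter> F1) \<inter> (Ch \<inter> F2) = {}"
    proof (rule ccontr)
      assume "(Ch \<inter> F1) \<inter> (Ch \<inter> F2) \<noteq> {}"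
      then obtain x where x: "x \<in> F1" "x \<in> F2" by blast
      have "orb x = F1" using same_orb[OF d1(1)] x(1) d1(2) by blast
      moreover have "orb x = F2" using same_orb[OF d2(1)] x(2) d2(2) by blast
      ultimately show False using F(3) by simp
    qed
  qed
  have faceBound: "2 * card (faces E \<sigma>) \<le> card Ch"
  proof -
    have "2 * card (faces E \<sigma>) = (\<Sum>F\<in>faces E \<sigma>. 2)" by (simp add: mult.commute)
    also have "\<dots> \<le> (\<Sum>F\<in>faces E \<sigma>. card (Ch \<inter> F))" by (rule sum_mono) (rule ChF)
    also have "\<dots> = card (\<Union>F\<in>faces E \<sigma>. Ch \<inter> F)"
      by (rule card_UN_disjoint[symmetric]) (use finF finCh disjF in auto)
    also have "\<dots> \<le> card Ch" by (rule card_mono) (use finCh in auto)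
    finally show ?thesis .
  qed
  have dvD: "(\<sigma>^^n) d \<in> D \<and> dvert src tgt ((\<sigma>^^n) d) = dvert src tgt d" if "d \<in> D" for d n
    using that \<sigma>D dv by (induction n) auto
  have per_\<sigma>: "\<exists>n>0. (\<sigma>^^n) d = d" if H: "d \<in> D" for d
  proof -
    obtain m where "(\<sigma>^^m) (\<sigma> d) = d" using conn H \<sigma>D dv by metis
    then have "(\<sigma>^^Suc m) d = d" by (simp only: funpow_Suc_right comp_apply)
    then show ?thesis by blast
  qed
  have finNv: "finite (Nv w)" for w using finN by (simp add: Nv_def)
  have Nv2: "2 \<le> card (Nv w)" if H: "x \<in> D" "y \<in> D" "dvert src tgt x = w" "dvert src tgt y = w"
    "snd x \<noteq> snd y" for x y w
  proof -
    obtain n where yn: "(\<sigma>^^n) x = y" using conn H by metis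
    obtain n0 where n0: "0 < n0" "(\<sigma>^^n0) x = x" using per_\<sigma>[OF H(1)] by blast
    obtain p where p: "0 < p" "(\<sigma>^^p) x = x" "\<And>m. 0 < m \<Longrightarrow> m < p \<Longrightarrow> (\<sigma>^^m) x \<noteq> x"
      by (rule min_period[OF n0]) blast
    obtain i j where ij: "i < j" "j < p" "snd ((\<sigma>^^i) x) \<noteq> snd ((\<sigma>^^Suc i) x)"
      "snd ((\<sigma>^^j) x) \<noteq> snd ((\<sigma>^^Suc j) x)"
      using cyc2[OF p(1) p(2), of snd n] yn H(5) by metis
    have c1: "(\<sigma>^^i) x \<in> Nv w" using ij(3) dvD[OF H(1), of i] H(3) by (simp add: Nv_def N_def)
    have c2: "(\<sigma>^^j) x \<in> Nv w" using ij(4) dvD[OF H(1), of j] H(3) by (simp add: Nv_def N_def)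
    have sub: "{(\<sigma>^^i) x, (\<sigma>^^j) x} \<subseteq> Nv w" using c1 c2 by blast
    have neq: "(\<sigma>^^i) x \<noteq> (\<sigma>^^j) x" using period_neq[OF p(2) p(3) ij(1) ij(2)] .
    have "card {(\<sigma>^^i) x, (\<sigma>^^j) x} = 2" using neq by simp
    moreover have "card {(\<sigma>^^i) x, (\<sigma>^^j) x} \<le> card (Nv w)"
      by (rule card_mono[OF finNv sub])
    ultimately show ?thesis by simp
  qed
  have V_N: "\<forall>d\<in>N. dvert src tgt d \<in> V"
    by (auto simp: N_def D_def darts_def V_def verts_def)
  have finV: "finite V" using finE by (simp add: V_def verts_def)
  have sumN: "(\<Sum>w\<in>V. card (Nv w)) \<le> card N"
  proof -
    have "(\<Sum>w\<in>V. card (Nv w)) = card (\<Union>w\<in>V. Nv w)"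
      by (rule card_UN_disjoint[symmetric]) (use finV finNv in \<open>auto simp: Nv_def\<close>)
    also have "\<dots> \<le> card N" by (rule card_mono) (use finN in \<open>auto simp: Nv_def\<close>)
    finally show ?thesis .
  qed
  have vV: "v \<in> V" using assms(2) by (simp add: V_def)
  have vs: "v \<noteq> s" using srcs vV eE te unfolding V_def by blast
  have vt: "v \<noteq> t" using sinks vV bE sb unfolding V_def by blast
  have others: "2 \<le> card (Nv w)" if H: "w \<in> V - {s,t}" for w
  proof -
    have "\<exists>e1\<in>E. tgt e1 = w" using srcs H unfolding V_def by blast
    then obtain e1 where e1: "e1 \<in> E" "tgt e1 = w" by blast
    have "\<exists>e2\<in>E. src e2 = w" using sinks H unfolding V_def by blast
    then obtain e2 where e2: "e2 \<in> E" "src e2 = w" by blast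
    show ?thesis by (rule Nv2[of "(e1,False)" "(e2,True)"]) (use e1 e2 in \<open>auto simp: D_def darts_def\<close>)
  qed
  have v4: "4 \<le> card (Nv v)"
  proof -
    from co obtain i j k where ijk: "0<i" "i<j" "j<k" "(\<sigma>^^i) (e,False) = (b,True)"
      "(\<sigma>^^j) (e,False) = (a,False)" "(\<sigma>^^k) (e,False) = (f,True)"
      and nf: "\<forall>m. 0<m \<and> m\<le>k \<longrightarrow> (\<sigma>^^m) (e,False) \<noteq> (e,False)"
      unfolding cyclic_order4_def by blast
    define x where "x = (e, False)"
    have xD: "x \<in> D" using eE by (simp add: x_def D_def darts_def)
    have xv: "dvert src tgt x = v" using te by (simp add: x_def)
    obtain n0 where n0: "0 < n0" "(\<sigma>^^n0) x = x" using per_\<sigma>[OF xD] by blast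
    obtain p where p: "0 < p" "(\<sigma>^^p) x = x" "\<And>m. 0<m \<Longrightarrow> m<p \<Longrightarrow> (\<sigma>^^m) x \<noteq> x"
      by (rule min_period[OF n0]) blast
    have kp: "k < p"
    proof (rule ccontr)
      assume "\<not> k < p"
      then have "p \<le> k" by simp
      then show False using nf p(1,2) unfolding x_def by blast
    qed
    have s0: "\<not> snd ((\<sigma>^^0) x)" by (simp add: x_def)
    have si: "snd ((\<sigma>^^i) x)" using ijk(4) by (simp add: x_def)
    have sj: "\<not> snd ((\<sigma>^^j) x)" using ijk(5) by (simp add: x_def)
    have sk: "snd ((\<sigma>^^k) x)" using ijk(6) by (simp add: x_def)
    have sp: "\<not> snd ((\<sigma>^^p) x)" using p(2) by (simp add: x_def)
    obtain c1 where c1: "0 \<le> c1 \<and> c1 < i \<and> snd ((\<sigma>^^c1) x) \<noteq> snd ((\<sigma>^^Suc c1) x)"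
      using change_between[of 0 i snd \<sigma> x] ijk(1) s0 si by blast
    obtain c2 where c2: "i \<le> c2 \<and> c2 < j \<and> snd ((\<sigma>^^c2) x) \<noteq> snd ((\<sigma>^^Suc c2) x)"
      using change_between[of i j snd \<sigma> x] ijk(2) sj si by blast
    obtain c3 where c3: "j \<le> c3 \<and> c3 < k \<and> snd ((\<sigma>^^c3) x) \<noteq> snd ((\<sigma>^^Suc c3) x)"
      using change_between[of j k snd \<sigma> x] ijk(3) sj sk by blast
    obtain c4 where c4: "k \<le> c4 \<and> c4 < p \<and> snd ((\<sigma>^^c4) x) \<noteq> snd ((\<sigma>^^Suc c4) x)"
      using change_between[of k p snd \<sigma> x] kp sk sp by blast
    have inN: "(\<sigma>^^c) x \<in> Nv v" if "snd ((\<sigma>^^c) x) \<noteq> snd ((\<sigma>^^Suc c) x)" for c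
      using that dvD[OF xD, of c] xv by (simp add: Nv_def N_def)
    have ne: "(\<sigma>^^c) x \<noteq> (\<sigma>^^c') x" if "c < c'" "c' < p" for c c'
      using period_neq[OF p(2) p(3) that] .
    have o: "c1 < c2" "c2 < c3" "c3 < c4" "c4 < p" using c1 c2 c3 c4 by auto
    have d12: "(\<sigma>^^c1) x \<noteq> (\<sigma>^^c2) x" using ne o by simp
    have d13: "(\<sigma>^^c1) x \<noteq> (\<sigma>^^c3) x" using ne o by simp
    have d14: "(\<sigma>^^c1) x \<noteq> (\<sigma>^^c4) x" using ne o by simp
    have d23: "(\<sigma>^^c2) x \<noteq> (\<sigma>^^c3) x" using ne o by simp
    have d24: "(\<sigma>^^c2) x \<noteq> (\<sigma>^^c4) x" using ne o by simp
    have d34: "(\<sigma>^^c3) x \<noteq> (\<sigma>^^c4) x" using ne o by simp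
    have sub: "{(\<sigma>^^c1) x, (\<sigma>^^c2) x, (\<sigma>^^c3) x, (\<sigma>^^c4) x} \<subseteq> Nv v"
      using inN c1 c2 c3 c4 by blast
    have "card {(\<sigma>^^c1) x, (\<sigma>^^c2) x, (\<sigma>^^c3) x, (\<sigma>^^c4) x} = 4"
      using d12 d13 d14 d23 d24 d34 by simp
    moreover have "card {(\<sigma>^^c1) x, (\<sigma>^^c2) x, (\<sigma>^^c3) x, (\<sigma>^^c4) x} \<le> card (Nv v)"
      by (rule card_mono[OF finNv sub])
    ultimately show ?thesis by simp
  qed
  define V' where "V' = V - {s,t}"
  have vV': "v \<in> V'" using vV vs vt by (simp add: V'_def)
  have finV': "finite V'" using finV by (simp add: V'_def)
  have lb: "2 * card V' + 2 \<le> (\<Sum>w\<in>V. card (Nv w))"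
  proof -
    have e1: "(\<Sum>w\<in>V'. card (Nv w)) = card (Nv v) + (\<Sum>w\<in>V'-{v}. card (Nv w))"
      using finV' vV' by (rule sum.remove)
    have e2: "(\<Sum>w\<in>V'-{v}. (2::nat)) \<le> (\<Sum>w\<in>V'-{v}. card (Nv w))"
      by (rule sum_mono) (rule others, simp add: V'_def)
    have e3: "(\<Sum>w\<in>V'-{v}. (2::nat)) = 2 * card (V'-{v})" by simp
    have e4: "Suc (card (V' - {v})) = card V'" using card_Suc_Diff1[OF finV' vV'] .
    have e5: "(\<Sum>w\<in>V'. card (Nv w)) \<le> (\<Sum>w\<in>V. card (Nv w))"
      by (rule sum_mono2) (use finV in \<open>auto simp: V'_def\<close>)
    show ?thesis using e1 e2 e3 e4 e5 v4 by linarith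
  qed
  have cV: "card V \<le> card V' + 2"
  proof -
    have "card V \<le> card (V' \<union> {s,t})" by (rule card_mono) (auto simp: V'_def finV' finV)
    also have "\<dots> \<le> card V' + card {s,t}" by (rule card_Un_le)
    also have "card {s,t} \<le> 2" by (cases "s = t") simp_all
    then have "card V' + card {s,t} \<le> card V' + 2" by simp
    finally show ?thesis .
  qed
  have eu: "int (card V) - int (card E) + int (card (faces E \<sigma>)) = 2" using euler by (simp add: V_def)
  have "card N + card Ch = 2 * card E" using NS SCh cardD by simp
  then show False using lb sumN faceBound cV eu by linarith
qed

end
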